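(* Let $r\ge 2$ be an integer, let $\varphi$ be an instance of 2-Clause 3-SAT, and let $G(\varphi)$ be the graph constructed from $\varphi$ and $r$ as described in the context. If $\varphi$ is satisfiable, then $\mathrm{col}_r(G(\varphi)) \leq 6$.
   Context: 2-Clause 3-SAT: given a CNF formula $\varphi$ with clauses $c_1,\dots,c_m$ over variables $x_1,\dots,x_n$ in which each clause contains at most 3 literals and each literal ($x_j$ or $\overline{x}_j$) appears in exactly 2 clauses, decide whether $\varphi$ is satisfiable. It is assumed throughout that no variable appears twice in a single clause and there are no single-literal clauses (so each clause has 2 or 3 literals). An $\ell$-subdivided edge between $a$ and $b$ is an induced path with $\ell$ internal vertices (subdivision vertices) joining $a$ and $b$, whose internal vertices have no other neighbors. Construction of $G(\varphi)$: for each clause $c_i$ create a vertex $u_i$. For each variable $x_j$ create two vertices $v_j,v'_j$ (for literals $x_j$, $\overline{x}_j$) joined by an edge. For each clause $c_i$ containing literal $x_j$ (resp. $\overline{x}_j$), join $u_i$ and $v_j$ (resp. $v'_j$) by an $(r-1)$-subdivided edge. Add a 7-clique on new vertices $w_1,\dots,w_7$. For each clause $c_i$ add edges from $u_i$ to $w_1,\dots,w_4$, and if $c_i$ has only 2 literals also an edge from $u_i$ to $w_5$. For each variable $x_j$ add edges from $v_j$ to $w_2,w_3,w_4$ and from $v'_j$ to $w_5,w_6,w_7$. Coloring numbers: for a graph $G=(V,E)$ and a total order $\sigma$ of $V$, a vertex $v\neq u$ is $r$-reachable from $u$ if $u<_\sigma v$ and there is a $u$–$v$ path of length at most $r$ all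 of whose vertices other than $u,v$ precede $u$ in $\sigma$; $\mathrm{reach}_r(u,G_\sigma)$ is the set of such $v$, and $\mathrm{col}_r(G)=\min_\sigma\max_u|\mathrm{reach}_r(u,G_\sigma)|$ over all total orders $\sigma$ of $V$. *)

theory Defs
  imports Main
begin

text \<open>A total order of a finite vertex set is represented by a map sigma into nat that is
  injective on VG (u precedes v iff sigma u < sigma v).\<close>

definition is_path :: "'a set \<Rightarrow> ('a \<Rightarrow> 'a \<Rightarrow> bool) \<Rightarrow> 'a list \<Rightarrow> bool" where
  "is_path VG EG p \<longleftrightarrow> p \<noteq> [] \<and> distinct p \<and> set p \<subseteq> VG \<and>
     (\<forall>k. Suc k < length p \<longrightarrow> EG (p ! k) (p ! Suc k))"

text \<open>The length of a path p is length p - 1 (number of edges).\<close>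

definition reach ::
  "'a set \<Rightarrow> ('a \<Rightarrow> 'a \<Rightarrow> bool) \<Rightarrow> nat \<Rightarrow> ('a \<Rightarrow> nat) \<Rightarrow> 'a \<Rightarrow> 'a set" where
  "reach VG EG r \<sigma> u = {v \<in> VG. v \<noteq> u \<and> \<sigma> u < \<sigma> v \<and>
     (\<exists>p. is_path VG EG p \<and> hd p = u \<and> last p = v \<and> length p \<le> r + 1 \<and>
          (\<forall>w \<in> set (butlast (tl p)). \<sigma> w < \<sigma> u))}"

definition col :: "'a set \<Rightarrow> ('a \<Rightarrow> 'a \<Rightarrow> bool) \<Rightarrow> nat \<Rightarrow> nat" where
  "col VG EG r = (LEAST k. \<exists>\<sigma>. inj_on \<sigma> VG \<and>
      Max ((\<lambda>u. card (reach VG EG r \<sigma> u)) ` VG) = k)"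

text \<open>Variables are 0..<n, clauses are indexed 0..<m; clause i is the set cl i of literals.
  A literal is a pair (j, b): (j, True) is x_j and (j, False) is its negation.\<close>

definition two_clause_3sat :: "nat \<Rightarrow> nat \<Rightarrow> (nat \<Rightarrow> (nat \<times> bool) set) \<Rightarrow> bool" where
  "two_clause_3sat n m cl \<longleftrightarrow>
     (\<forall>i<m. cl i \<subseteq> {..<n} \<times> UNIV) \<and>
     (\<forall>i<m. card (cl i) = 2 \<or> card (cl i) = 3) \<and>
     (\<forall>i<m. \<forall>j. \<not> ((j, True) \<in> cl i \<and> (j, False) \<in> cl i)) \<and>
     (\<forall>j<n. \<forall>b. card {i. i < m \<and> (j, b) \<in> cl i} = 2)"

definition satisfiable :: "nat \<Rightarrow> (nat \<Rightarrow> (nat \<times> bool) set) \<Rightarrow> bool" where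
  "satisfiable m cl \<longleftrightarrow> (\<exists>a :: nat \<Rightarrow> bool. \<forall>i<m. \<exists>(j, b) \<in> cl i. a j = b)"

text \<open>U i: clause vertex u_i; V j: v_j; V' j: v'_j; W a: w_a (a = 1..7);
  S i j b k: k-th subdivision vertex (1 <= k <= r-1) on the path from u_i to the vertex
  of literal (j,b).\<close>

datatype vtx = U nat | V nat | V' nat | W nat | S nat nat bool nat

fun litv :: "nat \<Rightarrow> bool \<Rightarrow> vtx" where
  "litv j True = V j"
| "litv j False = V' j"

definition node :: "nat \<Rightarrow> nat \<Rightarrow> nat \<Rightarrow> bool \<Rightarrow> nat \<Rightarrow> vtx" where
  "node r i j b k = (if k = 0 then U i else if k = r then litv j b else S i j b k)"

definition GV :: "nat \<Rightarrow> nat \<Rightarrow> (nat \<Rightarrow> (nat \<times> bool) set) \<Rightarrow> nat \<Rightarrow> vtx set" where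
  "GV n m cl r = U ` {..<m} \<union> V ` {..<n} \<union> V' ` {..<n} \<union> W ` {1..7} \<union>
     {S i j b k | i j b k. i < m \<and> (j, b) \<in> cl i \<and> 1 \<le> k \<and> k \<le> r - 1}"

definition Gbase :: "nat \<Rightarrow> nat \<Rightarrow> (nat \<Rightarrow> (nat \<times> bool) set) \<Rightarrow> nat \<Rightarrow> vtx \<Rightarrow> vtx \<Rightarrow> bool" where
  "Gbase n m cl r x y \<longleftrightarrow>
     (\<exists>i j b k. i < m \<and> (j, b) \<in> cl i \<and> k < r \<and>
        x = node r i j b k \<and> y = node r i j b (Suc k)) \<or>
     (\<exists>j<n. x = V j \<and> y = V' j) \<or>
     (\<exists>a c. a \<in> {1..7} \<and> c \<in> {1..7} \<and> a \<noteq> c \<and> x = W a \<and> y = W c) \<or>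
     (\<exists>i<m. x = U i \<and> (y \<in> W ` {1..4} \<or> (card (cl i) = 2 \<and> y = W 5))) \<or>
     (\<exists>j<n. x = V j \<and> y \<in> W ` {2, 3, 4}) \<or>
     (\<exists>j<n. x = V' j \<and> y \<in> W ` {5, 6, 7})"

definition GE :: "nat \<Rightarrow> nat \<Rightarrow> (nat \<Rightarrow> (nat \<times> bool) set) \<Rightarrow> nat \<Rightarrow> vtx \<Rightarrow> vtx \<Rightarrow> bool" where
  "GE n m cl r x y \<longleftrightarrow> Gbase n m cl r x y \<or> Gbase n m cl r y x"

end

theory Submission
  imports Defs "HOL-Library.Nat_Bijection"
begin

lemma litv_if: "litv j b = (if b then V j else V' j)"
  by (cases b) auto

lemma reach_sub:
  assumes u: "d u = 0"
  and step: "\<And>x y. x \<in> VG \<Longrightarrow> x = u \<or> x \<in> Z \<Longrightarrow> d x < r \<Longrightarrow> y \<in> VG \<Longrightarrow> EG x y \<Longrightarrow>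
     (\<sigma> u < \<sigma> y \<longrightarrow> y \<in> R) \<and> (\<sigma> y < \<sigma> u \<longrightarrow> y \<in> Z \<and> d y \<le> Suc (d x))"
  shows "reach VG EG r \<sigma> u \<subseteq> R"
proof
  fix v assume "v \<in> reach VG EG r \<sigma> u"
  then obtain p where v: "v \<in> VG" "v \<noteq> u" "\<sigma> u < \<sigma> v" and p: "is_path VG EG p" "hd p = u" "last p = v" "length p \<le> r+1"
    and int: "\<forall>w\<in>set (butlast (tl p)). \<sigma> w < \<sigma> u" unfolding reach_def by blast
  have ne: "p \<noteq> []" and sub: "set p \<subseteq> VG" and ed: "\<And>k. Suc k < length p \<Longrightarrow> EG (p ! k) (p ! Suc k)"
    using p(1) unfolding is_path_def by auto
  have len: "length p \<ge> 2"
  proof (rule ccontr)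
    assume "\<not> ?thesis"
    moreover have "length p > 0" using ne by simp
    ultimately have "length p = 1" by linarith
    then have "hd p = last p" using ne by (cases p) auto
    then show False using p v by simp
  qed
  have inv: "k < length p - 1 \<Longrightarrow> (p!k = u \<or> p!k \<in> Z) \<and> d (p!k) \<le> k" for k
  proof (induction k)
    case 0
    then show ?case using p(2) ne u by (simp add: hd_conv_nth)
  next
    case (Suc k)
    then have IH: "(p!k = u \<or> p!k \<in> Z) \<and> d (p!k) \<le> k" by simp
    have "butlast (tl p) ! k = p ! Suc k" using Suc.prems by (simp add: nth_butlast nth_tl)
    moreover have "k < length (butlast (tl p))" using Suc.prems by simp
    ultimately have "p ! Suc k \<in> set (butlast (tl p))" by (metis nth_mem)
    then have lt: "\<sigma> (p ! Suc k) < \<sigma> u" using int by blast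
    have m1: "p ! k \<in> VG" "p ! Suc k \<in> VG" using sub Suc.prems by auto
    have e: "EG (p!k) (p!Suc k)" using ed[of k] Suc.prems by auto
    have dk: "d (p!k) < r" using IH Suc.prems p(4) by linarith
    have "(\<sigma> (p!Suc k) < \<sigma> u \<longrightarrow> p!Suc k \<in> Z \<and> d (p!Suc k) \<le> Suc (d (p!k)))"
      using step[OF m1(1) _ dk m1(2) e] IH by blast
    then show ?case using lt IH by auto
  qed
  define k where "k = length p - 2"
  have k1: "Suc k = length p - 1" "k < length p - 1" using len k_def by auto
  have "p ! Suc k = v" using p(3) ne k1 by (simp add: last_conv_nth)
  have m1: "p ! k \<in> VG" "p ! Suc k \<in> VG" using sub k1 by auto
  have e: "EG (p!k) (p!Suc k)" using ed[of k] k1 by auto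
  have dk: "d (p!k) < r" using inv[OF k1(2)] k1 p(4) by linarith
  then show "v \<in> R"
    using step[OF m1(1) _ dk m1(2) e] inv[OF k1(2)] v \<open>p ! Suc k = v\<close> by blast
qed

lemma GE_S: assumes "r \<ge> 2" "GE n m cl r (S i j b k) y"
  shows "0<k \<and> k<r \<and> i<m \<and> (j,b)\<in>cl i \<and> (y = node r i j b (k-1) \<or> y = node r i j b (Suc k))"
  using assms unfolding GE_def Gbase_def node_def by (auto simp: litv_if split: if_splits)

lemma GE_U: assumes "r \<ge> 2" "GE n m cl r (U i) y"
  shows "i<m \<and> (y \<in> W`{1..4} \<or> (card (cl i) = 2 \<and> y = W 5) \<or> (\<exists>j b. (j,b) \<in> cl i \<and> y = S i j b 1))"
  using assms unfolding GE_def Gbase_def node_def by (auto simp: litv_if split: if_splits)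

lemma GE_lit: assumes "r \<ge> 2" "GE n m cl r (litv j c) y"
  shows "y = litv j (\<not>c) \<or> y \<in> W ` (if c then {2,3,4} else {5,6,7}) \<or> (\<exists>i<m. (j,c)\<in>cl i \<and> y = S i j c (r-1))"
  using assms unfolding GE_def Gbase_def node_def by (cases c; auto simp: litv_if split: if_splits)

definition lay :: "(nat \<Rightarrow> bool) \<Rightarrow> vtx \<Rightarrow> nat" where
  "lay a x = (case x of S _ _ _ _ \<Rightarrow> 0 | U _ \<Rightarrow> 2 | W _ \<Rightarrow> 4
     | V j \<Rightarrow> (if a j then 1 else 3) | V' j \<Rightarrow> (if a j then 3 else 1))"

definition inr :: "vtx \<Rightarrow> nat" where
  "inr x = (case x of S i j b k \<Rightarrow> prod_encode (prod_encode (i, prod_encode (j, if b then 1 else 0)), k)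
     | U i \<Rightarrow> i | W c \<Rightarrow> c | V j \<Rightarrow> j | V' j \<Rightarrow> j)"

definition sig :: "(nat \<Rightarrow> bool) \<Rightarrow> nat \<Rightarrow> vtx \<Rightarrow> nat" where
  "sig a N x = lay a x * N + inr x"

lemma sig_less:
  assumes "inr x < N" "inr y < N"
  shows "sig a N x < sig a N y \<longleftrightarrow> lay a x < lay a y \<or> (lay a x = lay a y \<and> inr x < inr y)"
proof -
  have A: "p * N + i < q * N + j" if "p < q" "i < N" for p q i j :: nat
  proof -
    have "p * N + i < Suc p * N" using that by simp
    also have "\<dots> \<le> q * N" using that by (intro mult_right_mono) auto
    finally show ?thesis by simp
  qed
  show ?thesis unfolding sig_def
    using A[of "lay a x" "lay a y" "inr x" "inr y"] A[of "lay a y" "lay a x" "inr y" "inr x"] assms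
    by (metis add_less_cancel_left linorder_neqE_nat not_less_iff_gr_or_eq)
qed

lemma prod_encode_mono2: "k1 < k2 \<Longrightarrow> prod_encode (c, k1) < prod_encode (c, k2)"
proof -
  have "strict_mono (\<lambda>k. prod_encode (c, k))"
    by (simp add: strict_mono_Suc_iff prod_encode_def)
  then show "k1 < k2 \<Longrightarrow> prod_encode (c, k1) < prod_encode (c, k2)" by (simp add: strict_mono_def)
qed

lemma GV_finite: assumes "\<forall>i<m. finite (cl i)" shows "finite (GV n m cl r)"
proof -
  have "{S i j b k | i j b k. i < m \<and> (j, b) \<in> cl i \<and> 1 \<le> k \<and> k \<le> r - 1}
     \<subseteq> (\<lambda>(i,(j,b),k). S i j b k) ` (SIGMA i:{..<m}. cl i \<times> {..r})" by force
  moreover have "finite (SIGMA i:{..<m}. cl i \<times> {..r})" using assms by auto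
  ultimately show ?thesis unfolding GV_def by (meson finite_Un finite_imageI finite_subset finite_atLeastAtMost finite_lessThan)
qed


lemma lay_simps[simp]: "lay a (S i j b k) = 0" "lay a (U i) = 2" "lay a (W e) = 4"
  "lay a (litv j c) = (if a j = c then 1 else 3)"
  unfolding lay_def by (auto simp: litv_if)

lemma inr_S[simp]: "inr (S i j b k) = prod_encode (prod_encode (i, prod_encode (j, if b then 1 else 0)), k)"
  unfolding inr_def by simp

lemma GV_simps[simp]: "U i \<in> GV n m cl r \<longleftrightarrow> i<m" "V j \<in> GV n m cl r \<longleftrightarrow> j<n"
  "V' j \<in> GV n m cl r \<longleftrightarrow> j<n" "W c \<in> GV n m cl r \<longleftrightarrow> c \<in> {1..7}"
  "S i j b k \<in> GV n m cl r \<longleftrightarrow> i<m \<and> (j,b)\<in>cl i \<and> 1\<le>k \<and> k\<le>r-1"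
  unfolding GV_def by auto

lemma litv_GV[simp]: "litv j c \<in> GV n m cl r \<longleftrightarrow> j<n" by (simp add: litv_if)

lemma litv_neq[simp]: "litv j c \<noteq> S i j' b k" "litv j c \<noteq> U i" "litv j c \<noteq> W e'"
   "S i j' b k \<noteq> litv j c" "U i \<noteq> litv j c" "W e' \<noteq> litv j c"
  by (auto simp: litv_if)

lemma litv_eq[simp]: "litv j c = litv j' c' \<longleftrightarrow> j = j' \<and> c = c'"
  by (auto simp: litv_if)

lemma lay_inr_inj: "lay a x = lay a y \<Longrightarrow> inr x = inr y \<Longrightarrow> x = y"
proof (cases x)
  case (S i j b k)
  then show "lay a x = lay a y \<Longrightarrow> inr x = inr y \<Longrightarrow> x = y"
    by (cases y) (simp_all add: lay_def inr_def prod_encode_eq split: if_splits)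
next
  case (U i)
  then show "lay a x = lay a y \<Longrightarrow> inr x = inr y \<Longrightarrow> x = y"
    by (cases y) (simp_all add: lay_def inr_def split: if_splits)
next
  case (V i)
  then show "lay a x = lay a y \<Longrightarrow> inr x = inr y \<Longrightarrow> x = y"
    by (cases y) (simp_all add: lay_def inr_def split: if_splits)
next
  case (V' i)
  then show "lay a x = lay a y \<Longrightarrow> inr x = inr y \<Longrightarrow> x = y"
    by (cases y) (simp_all add: lay_def inr_def split: if_splits)
next
  case (W i)
  then show "lay a x = lay a y \<Longrightarrow> inr x = inr y \<Longrightarrow> x = y"
    by (cases y) (simp_all add: lay_def inr_def split: if_splits)
qed

context
  fixes n m r :: nat and cl and a :: "nat \<Rightarrow> bool"
  assumes r2: "r \<ge> 2" and tc: "two_clause_3sat n m cl" and sat: "\<forall>i<m. \<exists>(j,b)\<in>cl i. a j = b"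
begin

abbreviation "VG \<equiv> GV n m cl r"
abbreviation "EG \<equiv> GE n m cl r"
abbreviation "NN \<equiv> Suc (Max (inr ` VG))"
abbreviation "\<sigma> \<equiv> sig a NN"

lemma clfin: "i < m \<Longrightarrow> finite (cl i)"
  using tc unfolding two_clause_3sat_def by (metis card.infinite zero_neq_numeral)

lemma clcard: "i < m \<Longrightarrow> card (cl i) = 2 \<or> card (cl i) = 3"
  using tc unfolding two_clause_3sat_def by blast

lemma cln: "i < m \<Longrightarrow> (j,b) \<in> cl i \<Longrightarrow> j < n"
  using tc unfolding two_clause_3sat_def by blast

lemma occ: "j < n \<Longrightarrow> card {i. i < m \<and> (j, b) \<in> cl i} = 2"
  using tc unfolding two_clause_3sat_def by blast

lemma finVG: "finite VG" using GV_finite clfin by blast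

lemma inr_lt: "x \<in> VG \<Longrightarrow> inr x < NN"
  using finVG by (simp add: le_imp_less_Suc)

lemma sless: "x \<in> VG \<Longrightarrow> y \<in> VG \<Longrightarrow> \<sigma> x < \<sigma> y \<longleftrightarrow> lay a x < lay a y \<or> (lay a x = lay a y \<and> inr x < inr y)"
  using sig_less inr_lt by blast

lemma sless_S: "S i j b k1 \<in> VG \<Longrightarrow> S i j b k2 \<in> VG \<Longrightarrow> \<sigma> (S i j b k1) < \<sigma> (S i j b k2) \<longleftrightarrow> k1 < k2"
  apply (subst sless, assumption, assumption)
  using prod_encode_mono2 by (simp add: linorder_neqE_nat) (metis less_asym' linorder_neqE_nat)


lemma case_S:
  assumes i: "i<m" "(j,b)\<in>cl i" "1\<le>k" "k\<le>r-1"
  shows "card (reach VG EG r \<sigma> (S i j b k)) \<le> 6"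
proof -
  let ?u = "S i j b k"
  let ?R = "{U i, node r i j b (Suc k)}"
  let ?Z = "{S i j b k' | k'. 0<k' \<and> k'<k}"
  have uV: "?u \<in> VG" using i by simp
  have "reach VG EG r \<sigma> ?u \<subseteq> ?R"
  proof (rule reach_sub[where d="\<lambda>_. 0" and Z="?Z"])
    fix x y assume x: "x\<in>VG" "x = ?u \<or> x \<in> ?Z" and y: "y\<in>VG" and e: "EG x y"
    then obtain k' where xk: "x = S i j b k'" "0<k'" "k'\<le>k" by auto
    from GE_S[OF r2 e[unfolded xk(1)]] have "y = node r i j b (k'-1) \<or> y = node r i j b (Suc k')" by auto
    then show "(\<sigma> ?u < \<sigma> y \<longrightarrow> y \<in> ?R) \<and> (\<sigma> y < \<sigma> ?u \<longrightarrow> y \<in> ?Z \<and> 0 \<le> Suc 0)"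
    proof
      assume yy: "y = node r i j b (k'-1)"
      show ?thesis
      proof (cases "k' = 1")
        case True
        then show ?thesis using yy y uV by (simp add: node_def sless)
      next
        case False
        then have "y = S i j b (k'-1)" using yy xk i by (simp add: node_def)
        then show ?thesis using y uV xk False by (auto simp add: sless_S)
      qed
    next
      assume yy: "y = node r i j b (Suc k')"
      show ?thesis
      proof (cases "Suc k' = r")
        case True
        then have "y = litv j b" "k' = k" using yy xk i by (auto simp add: node_def)
        then show ?thesis using y uV yy by (simp add: sless)
      next
        case False
        then have ys: "y = S i j b (Suc k')" using yy xk i by (simp add: node_def)
        show ?thesis
        proof (cases "k' = k")
          case True
          have "y \<in> ?R" using yy True by simp
          moreover have "\<not> \<sigma> y < \<sigma> ?u" using ys y uV True by (simp add: sless_S)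
          ultimately show ?thesis by blast
        next
          case False
          then show ?thesis using ys y uV xk by (auto simp add: sless_S)
        qed
      qed
    qed
  qed simp
  moreover have "card ?R \<le> 2" by (cases "U i = node r i j b (Suc k)") auto
  ultimately have "card (reach VG EG r \<sigma> ?u) \<le> card ?R" by (intro card_mono) auto
  then show ?thesis using \<open>card ?R \<le> 2\<close> by linarith
qed


lemma case_T:
  assumes j: "j<n" "a j = c"
  shows "card (reach VG EG r \<sigma> (litv j c)) \<le> 6"
proof -
  let ?u = "litv j c"
  let ?R = "insert (litv j (\<not>c)) (W ` (if c then {2,3,4} else {5,6,7}) \<union> U ` {i. i<m \<and> (j,c)\<in>cl i})"
  let ?Z = "{S i j c k | i k. i<m \<and> (j,c)\<in>cl i \<and> 0<k \<and> k<r}"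
  have uV: "?u \<in> VG" using j by simp
  have "reach VG EG r \<sigma> ?u \<subseteq> ?R"
  proof (rule reach_sub[where d="\<lambda>_. 0" and Z="?Z"])
    fix x y assume x: "x\<in>VG" "x = ?u \<or> x \<in> ?Z" and y: "y\<in>VG" and e: "EG x y"
    show "(\<sigma> ?u < \<sigma> y \<longrightarrow> y \<in> ?R) \<and> (\<sigma> y < \<sigma> ?u \<longrightarrow> y \<in> ?Z \<and> 0 \<le> Suc 0)"
      using x(2)
    proof
      assume xu: "x = ?u"
      from GE_lit[OF r2 e[unfolded xu]]
      show ?thesis
      proof (elim disjE exE conjE)
        assume "y = litv j (\<not> c)" then show ?thesis using j y uV by (simp add: sless)
      next
        assume "y \<in> W ` (if c then {2, 3, 4} else {5, 6, 7})" then show ?thesis using j y uV by (auto simp add: sless)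
      next
        fix i assume "i<m" "(j,c)\<in>cl i" "y = S i j c (r-1)"
        then show ?thesis using j y uV r2 by (auto simp add: sless)
      qed
    next
      assume "x \<in> ?Z"
      then obtain i k where xk: "x = S i j c k" "i<m" "(j,c)\<in>cl i" "0<k" "k<r" by blast
      from GE_S[OF r2 e[unfolded xk(1)]] have "y = node r i j c (k-1) \<or> y = node r i j c (Suc k)" by auto
      then show ?thesis
      proof
        assume yy: "y = node r i j c (k-1)"
        show ?thesis
        proof (cases "k = 1")
          case True
          then show ?thesis using yy y uV xk j by (auto simp add: node_def sless)
        next
          case False
          then have "y = S i j c (k-1)" using yy xk by (simp add: node_def)
          then show ?thesis using y uV xk False j by (auto simp add: sless)
        qed
      next
        assume yy: "y = node r i j c (Suc k)"
        show ?thesis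
        proof (cases "Suc k = r")
          case True
          then have "y = ?u" using yy by (simp add: node_def)
          then show ?thesis by simp
        next
          case False
          then have "y = S i j c (Suc k)" using yy xk by (simp add: node_def)
          then show ?thesis using y uV xk False j by (auto simp add: sless)
        qed
      qed
    qed
  qed simp
  moreover have "card ?R \<le> 6"
  proof -
    have f1: "finite (W ` (if c then {2,3,4} else {5,6,7}))" by simp
    have f2: "finite (U ` {i. i<m \<and> (j,c)\<in>cl i})" by simp
    have c1: "card (W ` (if c then {2,3,4} else {5,6,7})) \<le> 3"
      by (rule order_trans[OF card_image_le]) auto
    have c2: "card (U ` {i. i<m \<and> (j,c)\<in>cl i}) \<le> 2"
      using card_image_le[of "{i. i<m \<and> (j,c)\<in>cl i}" U] occ[OF j(1), of c] by simp
    have "card ?R \<le> Suc (card (W ` (if c then {2,3,4} else {5,6,7}) \<union> U ` {i. i<m \<and> (j,c)\<in>cl i}))"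
      using f1 f2 by (simp add: card_insert_if)
    also have "\<dots> \<le> Suc (3 + 2)" using card_Un_le[of "W ` (if c then {2,3,4} else {5,6,7})" "U ` {i. i<m \<and> (j,c)\<in>cl i}"] c1 c2 by linarith
    finally show ?thesis by simp
  qed
  moreover have "finite ?R" by simp
  ultimately have "card (reach VG EG r \<sigma> ?u) \<le> card ?R" by (intro card_mono)
  then show ?thesis using \<open>card ?R \<le> 6\<close> by linarith
qed


lemma case_U:
  assumes i: "i<m"
  shows "card (reach VG EG r \<sigma> (U i)) \<le> 6"
proof -
  let ?u = "U i"
  let ?F = "{p \<in> cl i. a (fst p) \<noteq> snd p}"
  let ?R = "W`{1..4} \<union> (if card (cl i) = 2 then {W 5} else {}) \<union> (\<lambda>p. litv (fst p) (snd p)) ` ?F"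
  let ?Z = "{S i j b k | j b k. (j,b)\<in>cl i \<and> 0<k \<and> k<r} \<union> {litv j b | j b. (j,b)\<in>cl i \<and> a j = b}"
  define d where "d = (\<lambda>x. case x of S _ _ _ k \<Rightarrow> k | U _ \<Rightarrow> 0 | _ \<Rightarrow> r)"
  have dS: "d (S i' j b k) = k" and dU: "d (U i') = 0" and dl: "d (litv j b) = r" for i' j b k
    unfolding d_def by (auto simp: litv_if)
  have uV: "?u \<in> VG" using i by simp
  have "reach VG EG r \<sigma> ?u \<subseteq> ?R"
  proof (rule reach_sub[where d=d and Z="?Z"])
    fix x y assume x: "x\<in>VG" "x = ?u \<or> x \<in> ?Z" and dx: "d x < r" and y: "y\<in>VG" and e: "EG x y"
    show "(\<sigma> ?u < \<sigma> y \<longrightarrow> y \<in> ?R) \<and> (\<sigma> y < \<sigma> ?u \<longrightarrow> y \<in> ?Z \<and> d y \<le> Suc (d x))"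
    proof (cases "x = ?u")
      case True
      from GE_U[OF r2 e[unfolded True]]
      show ?thesis
      proof (elim disjE exE conjE)
        assume "y \<in> W ` {1..4}" then show ?thesis using y uV by (auto simp add: sless)
      next
        assume "card (cl i) = 2" "y = W 5" then show ?thesis using y uV by (auto simp add: sless)
      next
        fix j b assume "(j,b)\<in>cl i" "y = S i j b 1"
        then show ?thesis using y uV r2 True by (auto simp add: sless dS dU)
      qed
    next
      case False
      then have "x \<in> ?Z" using x by blast
      then have "\<exists>j b k. x = S i j b k \<and> (j,b)\<in>cl i \<and> 0<k \<and> k<r"
        using dx by (auto simp: dl)
      then obtain j b k where xk: "x = S i j b k" "(j,b)\<in>cl i" "0<k" "k<r" by blast
      from GE_S[OF r2 e[unfolded xk(1)]] have "y = node r i j b (k-1) \<or> y = node r i j b (Suc k)" by auto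
      then show ?thesis
      proof
        assume yy: "y = node r i j b (k-1)"
        show ?thesis
        proof (cases "k = 1")
          case True
          then show ?thesis using yy by (auto simp add: node_def)
        next
          case False
          then have "y = S i j b (k-1)" using yy xk by (simp add: node_def)
          then show ?thesis using y uV xk False by (auto simp add: sless dS)
        qed
      next
        assume yy: "y = node r i j b (Suc k)"
        show ?thesis
        proof (cases "Suc k = r")
          case True
          then have yl: "y = litv j b" using yy by (simp add: node_def)
          show ?thesis
          proof (cases "a j = b")
            case True
            then show ?thesis using yl y uV xk \<open>Suc k = r\<close> by (auto simp add: sless dS dl)
          next
            case False
            then have "y \<in> ?R" using yl xk by force
            moreover have "\<not> \<sigma> y < \<sigma> ?u" using yl y uV False by (simp add: sless)
            ultimately show ?thesis by blast
          qed
        next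
          case False
          then have "y = S i j b (Suc k)" using yy xk by (simp add: node_def)
          then show ?thesis using y uV xk False by (auto simp add: sless dS)
        qed
      qed
    qed
  qed (simp add: dU)
  moreover have "card ?R \<le> 6"
  proof -
    have fin: "finite (cl i)" using clfin i .
    obtain j0 b0 where jb: "(j0,b0) \<in> cl i" "a j0 = b0" using sat i by blast
    have "?F \<subset> cl i" using jb by force
    then have cF: "card ?F < card (cl i)" using fin by (simp add: psubset_card_mono)
    have c1: "card (W`{1..4::nat}) \<le> 4"
      by (rule order_trans[OF card_image_le]) auto
    have c2: "card ((\<lambda>p. litv (fst p) (snd p)) ` ?F) \<le> card ?F"
      using fin by (intro card_image_le) auto
    have c3: "card (if card (cl i) = 2 then {W 5} else {}) = (if card (cl i) = 2 then 1 else 0)" by simp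
    have "card ?R \<le> card (W`{1..4::nat}) + card (if card (cl i) = 2 then {W 5} else {}) + card ((\<lambda>p. litv (fst p) (snd p)) ` ?F)"
      by (meson card_Un_le add_le_mono le_refl order_trans)
    then show ?thesis using c1 c2 c3 cF clcard[OF i] by auto
  qed
  moreover have "finite ?R" using clfin[OF i] by simp
  ultimately have "card (reach VG EG r \<sigma> ?u) \<le> card ?R" by (intro card_mono)
  then show ?thesis using \<open>card ?R \<le> 6\<close> by linarith
qed


lemma case_F:
  assumes j: "j<n" "a j \<noteq> c"
  shows "card (reach VG EG r \<sigma> (litv j c)) \<le> 6"
proof -
  let ?u = "litv j c"
  let ?t = "litv j (\<not>c)"
  let ?R = "W ` {2..7}"
  let ?Z = "{?t} \<union> {S i j b k | i b k. i<m \<and> (j,b)\<in>cl i \<and> 0<k \<and> k<r} \<union> {U i | i. i<m \<and> (j,c)\<in>cl i}"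
  define d where "d = (\<lambda>x. if x = ?u then 0 else if x = ?t then 1 else
     (case x of S _ _ b k \<Rightarrow> (if b = c then r - k else Suc r - k) | _ \<Rightarrow> r))"
  have dS: "d (S i' j' b k) = (if b = c then r - k else Suc r - k)" and dU: "d (U i') = r"
    and du: "d ?u = 0" and dt: "d ?t = 1" for i' j' b k
    unfolding d_def by auto
  have uV: "?u \<in> VG" and tV: "?t \<in> VG" using j by simp_all
  have lu: "lay a ?u = 3" and lt: "lay a ?t = 1" using j by auto
  have "reach VG EG r \<sigma> ?u \<subseteq> ?R"
  proof (rule reach_sub[where d=d and Z="?Z"])
    fix x y assume x: "x\<in>VG" "x = ?u \<or> x \<in> ?Z" and dx: "d x < r" and y: "y\<in>VG" and e: "EG x y"
    show "(\<sigma> ?u < \<sigma> y \<longrightarrow> y \<in> ?R) \<and> (\<sigma> y < \<sigma> ?u \<longrightarrow> y \<in> ?Z \<and> d y \<le> Suc (d x))"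
    proof (cases "x = ?u")
      case True
      from GE_lit[OF r2 e[unfolded True]]
      show ?thesis
      proof (elim disjE exE conjE)
        assume "y = ?t" then show ?thesis using y uV True j by (simp add: sless du dt)
      next
        assume "y \<in> W ` (if c then {2, 3, 4} else {5, 6, 7})" then show ?thesis using y uV by (auto simp add: sless lu split: if_splits)
      next
        fix i assume "i<m" "(j,c)\<in>cl i" "y = S i j c (r-1)"
        then show ?thesis using y uV r2 True by (auto simp add: sless dS du lu)
      qed
    next
      case xnu: False
      show ?thesis
      proof (cases "x = ?t")
        case True
        from GE_lit[OF r2 e[unfolded True]]
        show ?thesis
        proof (elim disjE exE conjE)
          assume "y = litv j (\<not>\<not>c)" then show ?thesis by simp
        next
          assume "y \<in> W ` (if \<not>c then {2, 3, 4} else {5, 6, 7})" then show ?thesis using y uV by (auto simp add: sless lu split: if_splits)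
        next
          fix i assume "i<m" "(j,\<not>c)\<in>cl i" "y = S i j (\<not>c) (r-1)"
          then show ?thesis using y uV r2 True by (auto simp add: sless dS dt lu)
        qed
      next
        case xnt: False
        have "\<exists>i b k. x = S i j b k \<and> i<m \<and> (j,b)\<in>cl i \<and> 0<k \<and> k<r"
          using x(2) xnu xnt dx by (auto simp: dU)
        then obtain i b k where xk: "x = S i j b k" "i<m" "(j,b)\<in>cl i" "0<k" "k<r" by blast
        from GE_S[OF r2 e[unfolded xk(1)]] have "y = node r i j b (k-1) \<or> y = node r i j b (Suc k)" by auto
        then show ?thesis
        proof
          assume yy: "y = node r i j b (k-1)"
          show ?thesis
          proof (cases "k = 1")
            case True
            then have "y = U i" using yy by (simp add: node_def)
            moreover have "b = c" using dx xk True by (auto simp: dS split: if_splits)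
            ultimately show ?thesis using y uV xk True j by (auto simp add: sless dS dU)
          next
            case False
            then have "y = S i j b (k-1)" using yy xk by (simp add: node_def)
            then show ?thesis using y uV xk False by (auto simp add: sless dS lu)
          qed
        next
          assume yy: "y = node r i j b (Suc k)"
          show ?thesis
          proof (cases "Suc k = r")
            case True
            then have yl: "y = litv j b" using yy by (simp add: node_def)
            show ?thesis
            proof (cases "b = c")
              case True
              then show ?thesis using yl by simp
            next
              case False
              then have "b = (\<not>c)" by simp
              then show ?thesis using yl y uV xk \<open>Suc k = r\<close> using j by (auto simp add: sless dS dt)
            qed
          next
            case False
            then have "y = S i j b (Suc k)" using yy xk by (simp add: node_def)
            then show ?thesis using y uV xk False by (auto simp add: sless dS lu)
          qed
        qed
      qed
    qed
  qed (rule du)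
  moreover have "card ?R \<le> 6"
    by (rule order_trans[OF card_image_le]) auto
  moreover have "finite ?R" by simp
  ultimately have "card (reach VG EG r \<sigma> ?u) \<le> card ?R" by (intro card_mono)
  then show ?thesis using \<open>card ?R \<le> 6\<close> by linarith
qed

lemma lay4: "lay a y = 4 \<Longrightarrow> \<exists>e. y = W e"
  unfolding lay_def by (cases y) (auto split: if_splits)

lemma lay_le: "lay a y \<le> 4"
  unfolding lay_def by (cases y) auto

lemma case_W:
  assumes e: "e \<in> {1..7}"
  shows "card (reach VG EG r \<sigma> (W e)) \<le> 6"
proof -
  let ?u = "W e"
  let ?R = "{y \<in> VG. \<sigma> ?u < \<sigma> y}"
  have uV: "?u \<in> VG" using e by simp
  have "reach VG EG r \<sigma> ?u \<subseteq> ?R"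
    by (rule reach_sub[where d="\<lambda>_. 0" and Z="{y. \<sigma> y < \<sigma> ?u}"]) auto
  moreover have "?R \<subseteq> W ` ({1..7} - {e})"
  proof
    fix y assume "y \<in> ?R"
    then have y: "y \<in> VG" "\<sigma> ?u < \<sigma> y" by auto
    then have "lay a y = 4" "y \<noteq> ?u" using sless[OF uV y(1)] lay_le[of y] by auto
    then obtain e' where "y = W e'" "e' \<noteq> e" using lay4 by blast
    then show "y \<in> W ` ({1..7} - {e})" using y by auto
  qed
  moreover have "card (W ` ({1..7::nat} - {e})) \<le> 6"
    using card_image_le[of "{1..7::nat} - {e}" W] e by simp
  ultimately show ?thesis
    by (meson card_mono finite_Diff finite_atLeastAtMost finite_imageI order_trans)
qed

lemma all_cases: assumes uv: "u \<in> VG" shows "card (reach VG EG r \<sigma> u) \<le> 6"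
proof (cases u)
  case (U i) then show ?thesis using case_U by (metis GV_simps(1) uv)
next
  case (V j)
  then have "u = litv j True" by simp
  then show ?thesis using case_T[of j True] case_F[of j True] V uv by (cases "a j") auto
next
  case (V' j)
  then have "u = litv j False" by simp
  then show ?thesis using case_T[of j False] case_F[of j False] V' uv by (cases "a j") auto
next
  case (W e) then show ?thesis using case_W uv by auto
next
  case (S i j b k) then show ?thesis using case_S uv by auto
qed

lemma inj_sig: "inj_on \<sigma> VG"
proof
  fix x y assume x: "x \<in> VG" and y: "y \<in> VG" and eq: "\<sigma> x = \<sigma> y"
  have "\<not> \<sigma> x < \<sigma> y" "\<not> \<sigma> y < \<sigma> x" using eq by auto
  then have L: "lay a x = lay a y" and I: "inr x = inr y" using sless[OF x y] sless[OF y x] by auto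
  show "x = y" using lay_inr_inj[OF L I] .
qed

lemma main: "col VG EG r \<le> 6"
proof -
  have "W 1 \<in> VG" by simp
  then have ne: "VG \<noteq> {}" by (metis empty_iff)
  have M: "Max ((\<lambda>u. card (reach VG EG r \<sigma> u)) ` VG) \<le> 6"
    using finVG ne all_cases by (simp add: Max_le_iff)
  have "col VG EG r \<le> Max ((\<lambda>u. card (reach VG EG r \<sigma> u)) ` VG)"
    unfolding col_def by (rule Least_le) (use inj_sig in blast)
  then show ?thesis using M by linarith
qed

end

theorem lemma3p14:
  fixes n m r :: nat and cl :: "nat \<Rightarrow> (nat \<times> bool) set"
  assumes "r \<ge> 2"
    and "two_clause_3sat n m cl"
    and "satisfiable m cl"
  shows "col (GV n m cl r) (GE n m cl r) r \<le> 6"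
proof -
  obtain a :: "nat \<Rightarrow> bool" where "\<forall>i<m. \<exists>(j, b) \<in> cl i. a j = b"
    using assms(3) unfolding satisfiable_def by blast
  then show ?thesis using main[OF assms(1,2)] by blast
qed

end
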